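(* Let $N\ge1$, $n,m\ge1$, and let $\mathbf A_i,\mathbf Q_i\in\mathbb R^{n\times n}$, $\mathbf B_i\in\mathbb R^{n\times m}$, $\mathbf S_i\in\mathbb R^{n\times m}$, $\mathbf R_i\in\mathbb R^{m\times m}$ ($1\le i\le N$) and $\mathbf T\in\mathbb R^{n\times n}$, with $\mathbf Q_i,\mathbf R_i,\mathbf T$ symmetric. Assume: (i) there is $\alpha>0$ such that the smallest eigenvalues of $\mathbf T$ and of each $\begin{pmatrix}\mathbf Q_i&\mathbf S_i\\ \mathbf S_i^{\mathsf T}&\mathbf R_i\end{pmatrix}$ exceed $\alpha$; (ii) $\|\mathbf A_i\|_\infty\le1/4$ and $\|\mathbf A_i^{\mathsf T}\|_\infty\le 1/4$ for all $i$; (iii) $\mathbf D_{1:N}$ is invertible with $\|\mathbf D_{1:N}^{-1}\|_\infty\le2$. Then the linear map $\nabla\mathcal T^*$ defined below is invertible.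
   Context: $-1<\tau_1<\dots<\tau_N<1$ are the $N$ Gauss abscissas (roots of the degree-$N$ Legendre polynomial), $\omega_1,\dots,\omega_N>0$ the Gauss weights, $\tau_0=-1$. $D_{ij}=\dot L_j(\tau_i)$ ($1\le i\le N$, $0\le j\le N$) with $L_j(\tau)=\prod_{k=0,k\ne j}^N\frac{\tau-\tau_k}{\tau_j-\tau_k}$, $\mathbf D_{1:N}=(D_{ij})_{1\le i,j\le N}$; $D^\dagger_{ij}=-(\omega_j/\omega_i)D_{ji}$ for $1\le i,j\le N$ and $D^\dagger_{i,N+1}=-\sum_{j=1}^ND^\dagger_{ij}$. Matrix $\|\cdot\|_\infty$ is the largest absolute row sum. (In the paper these matrices are $\mathbf A_i=\nabla_x\mathbf f$, $\mathbf B_i=\nabla_u\mathbf f$, $\mathbf Q_i=\nabla_{xx}H$, $\mathbf S_i=\nabla_{ux}H$, $\mathbf R_i=\nabla_{uu}H$ evaluated along an optimal solution at $\tau_i$, and $\mathbf T=\nabla^2C(\mathbf x^*(1))$.) The map $\nabla\mathcal T^*$ sends $(\mathbf X_1,\dots,\mathbf X_{N+1},\mathbf U_1,\dots,\mathbf U_N,\boldsymbol\Lambda_1,\dots,\boldsymbol\Lambda_{N+1})$ (blocks in $\mathbb R^n,\mathbb R^m,\mathbb R^n$) to the vector with components: $\sum_{j=1}^ND_{ij}\mathbf X_j-\mathbf A_i\mathbf X_i-\mathbf B_i\mathbf U_i$ ($1\le i\le N$); $\mathbf X_{N+1}-\sum_{j=1}^N\omega_j(\mathbf A_j\mathbf X_j+\mathbf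 B_j\mathbf U_j)$; $\sum_{j=1}^{N+1}D^\dagger_{ij}\boldsymbol\Lambda_j+\mathbf A_i^{\mathsf T}\boldsymbol\Lambda_i+\mathbf Q_i\mathbf X_i+\mathbf S_i\mathbf U_i$ ($1\le i\le N$); $\boldsymbol\Lambda_{N+1}-\mathbf T\mathbf X_{N+1}$; $\mathbf S_i^{\mathsf T}\mathbf X_i+\mathbf R_i\mathbf U_i+\mathbf B_i^{\mathsf T}\boldsymbol\Lambda_i$ ($1\le i\le N$). *)

theory Defs
  imports "HOL-Analysis.Analysis" "HOL-Computational_Algebra.Polynomial"
begin

fun legendre :: "nat \<Rightarrow> real poly" where
  "legendre 0 = 1"
| "legendre (Suc 0) = [:0, 1:]"
| "legendre (Suc (Suc k)) =
     smult (1 / real (k + 2))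
       (smult (real (2 * k + 3)) ([:0, 1:] * legendre (Suc k)) - smult (real (k + 1)) (legendre k))"

definition gauss_tau :: "nat \<Rightarrow> nat \<Rightarrow> real" where
  "gauss_tau N i = (if i = 0 then -1
     else sorted_list_of_set {x. poly (legendre N) x = 0} ! (i - 1))"

definition lagrange_basis :: "nat \<Rightarrow> nat set \<Rightarrow> nat \<Rightarrow> real poly" where
  "lagrange_basis N K j =
     (\<Prod>k\<in>K - {j}. smult (1 / (gauss_tau N j - gauss_tau N k)) [:- gauss_tau N k, 1:])"

definition gauss_weight :: "nat \<Rightarrow> nat \<Rightarrow> real" where
  "gauss_weight N i = integral {-1..1} (\<lambda>t. poly (lagrange_basis N {1..N} i) t)"

definition Dmat :: "nat \<Rightarrow> nat \<Rightarrow> nat \<Rightarrow> real" where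
  "Dmat N i j = poly (pderiv (lagrange_basis N {0..N} j)) (gauss_tau N i)"

definition Ddag :: "nat \<Rightarrow> nat \<Rightarrow> nat \<Rightarrow> real" where
  "Ddag N i j = (if j = N + 1
      then - (\<Sum>l=1..N. - (gauss_weight N l / gauss_weight N i) * Dmat N l i)
      else - (gauss_weight N j / gauss_weight N i) * Dmat N j i)"

definition inf_norm :: "real^'c^'r \<Rightarrow> real" where
  "inf_norm M = Max (range (\<lambda>i. \<Sum>j\<in>UNIV. \<bar>M $ i $ j\<bar>))"

definition is_eigenvalue :: "real^'n^'n \<Rightarrow> real \<Rightarrow> bool" where
  "is_eigenvalue M \<mu> \<longleftrightarrow> (\<exists>v. v \<noteq> 0 \<and> M *v v = \<mu> *\<^sub>R v)"

definition block_QSR :: "real^'n^'n \<Rightarrow> real^'m^'n \<Rightarrow> real^'m^'m \<Rightarrow> real^('n + 'm)^('n + 'm)" where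
  "block_QSR Q S R = (\<chi> i j. case (i, j) of
       (Inl a, Inl b) \<Rightarrow> Q $ a $ b
     | (Inl a, Inr b) \<Rightarrow> S $ a $ b
     | (Inr a, Inl b) \<Rightarrow> S $ b $ a
     | (Inr a, Inr b) \<Rightarrow> R $ a $ b)"

type_synonym ('n, 'm) kkt_vec = "(nat \<Rightarrow> real^'n) \<times> (nat \<Rightarrow> real^'m) \<times> (nat \<Rightarrow> real^'n)"

definition kkt_space :: "nat \<Rightarrow> ('n::finite, 'm::finite) kkt_vec set" where
  "kkt_space N = {(X, U, L). (\<forall>i. i \<notin> {1..N+1} \<longrightarrow> X i = 0)
                            \<and> (\<forall>i. i \<notin> {1..N} \<longrightarrow> U i = 0)
                            \<and> (\<forall>i. i \<notin> {1..N+1} \<longrightarrow> L i = 0)}"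

text \<open>Output: first component holds the N dynamics blocks and the (N+1)-th (quadrature) block,
  third component the N costate blocks and the terminal block, second the N control blocks.\<close>
definition gradT :: "nat \<Rightarrow> (nat \<Rightarrow> real^'n::finite^'n) \<Rightarrow> (nat \<Rightarrow> real^'m^'n) \<Rightarrow> (nat \<Rightarrow> real^'n^'n)
   \<Rightarrow> (nat \<Rightarrow> real^'m^'n) \<Rightarrow> (nat \<Rightarrow> real^'m^'m) \<Rightarrow> real^'n^'n
   \<Rightarrow> ('n, 'm) kkt_vec \<Rightarrow> ('n, 'm) kkt_vec" where
  "gradT N A B Q S R T = (\<lambda>(X, U, L).
     ((\<lambda>i. if 1 \<le> i \<and> i \<le> N then
              (\<Sum>j=1..N. Dmat N i j *\<^sub>R X j) - A i *v X i - B i *v U i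
           else if i = N + 1 then
              X (N + 1) - (\<Sum>j=1..N. gauss_weight N j *\<^sub>R (A j *v X j + B j *v U j))
           else 0),
      (\<lambda>i. if 1 \<le> i \<and> i \<le> N then
              transpose (S i) *v X i + R i *v U i + transpose (B i) *v L i
           else 0),
      (\<lambda>i. if 1 \<le> i \<and> i \<le> N then
              (\<Sum>j=1..N+1. Ddag N i j *\<^sub>R L j) + transpose (A i) *v L i + Q i *v X i + S i *v U i
           else if i = N + 1 then
              L (N + 1) - T *v X (N + 1)
           else 0)))"

end

theory Submission
  imports Defs "HOL-Library.Function_Algebras"
begin

lemma xmult: "[:0,1:] * (p::real poly) = pCons 0 p" by simp

lemma legendre_coeff: "coeff (legendre n) n > 0 \<and> (\<forall>k>n. coeff (legendre n) k = 0)"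
proof (induction n rule: legendre.induct)
  case 1 then show ?case by simp
next
  case 2 then show ?case by (simp add: coeff_pCons split: nat.splits)
next
  case (3 k)
  have c: "coeff (legendre (Suc (Suc k))) j =
     (real (2*k+3) * coeff (pCons 0 (legendre (Suc k))) j - real (k+1) * coeff (legendre k) j) / real (k+2)" for j
    by (cases j) (simp_all add: xmult field_simps)
  show ?case
  proof
    show "coeff (legendre (Suc (Suc k))) (Suc (Suc k)) > 0"
      unfolding c using 3 by (simp add: coeff_pCons)
    show "\<forall>j>Suc (Suc k). coeff (legendre (Suc (Suc k))) j = 0"
    proof (intro allI impI)
      fix j assume j: "j > Suc (Suc k)"
      then obtain j' where "j = Suc j'" "j' > Suc k" by (cases j) auto
      then show "coeff (legendre (Suc (Suc k))) j = 0" unfolding c using 3 by (simp add: coeff_pCons)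
    qed
  qed
qed

lemma degree_legendre: "degree (legendre n) = n"
proof -
  have "n \<le> degree (legendre n)" using legendre_coeff[of n] by (intro le_degree) auto
  moreover have "degree (legendre n) \<le> n" using legendre_coeff[of n] by (intro degree_le) auto
  ultimately show ?thesis by simp
qed

lemma legendre_ne0: "legendre n \<noteq> 0"
  using legendre_coeff[of n] by auto

lemma poly_legendre_rec:
  "poly (legendre (Suc (Suc k))) x =
     (real (2*k+3) * (x * poly (legendre (Suc k)) x) - real (k+1) * poly (legendre k) x) / real (k+2)"
  by (simp add: field_simps)

definition pint :: "nat \<Rightarrow> real" where "pint k = integral {-1..1} (\<lambda>x::real. x ^ k)"

lemma pint_val: "pint k = (1 - (-1) ^ (k+1)) / real (k+1)"
proof -
  have "((\<lambda>x::real. x ^ k) has_integral (1 ^ (k+1) / real (k+1) - (-1) ^ (k+1) / real (k+1))) {-1..1}"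
  proof (rule fundamental_theorem_of_calculus)
    fix x :: real
    have "((\<lambda>a. a^(k+1)/real(k+1)) has_real_derivative (real (k+1) * x ^ (k+1 - Suc 0))/real(k+1)) (at x)"
      by (intro DERIV_cdivide DERIV_pow)
    then have "((\<lambda>a. a^(k+1)/real(k+1)) has_real_derivative x^k) (at x)"
      by simp
    then show "((\<lambda>a. a^(k+1)/real(k+1)) has_vector_derivative x^k) (at x within {-1..1})"
      using has_real_derivative_iff_has_vector_derivative has_vector_derivative_at_within by blast
  qed simp
  from integral_unique[OF this] show ?thesis unfolding pint_def by (simp add: add_divide_distrib)
qed

lemma intg_poly: "(\<lambda>x. poly p x * x ^ k) integrable_on {-1..1::real}"
  by (intro integrable_continuous_interval continuous_intros)

definition mom :: "nat \<Rightarrow> nat \<Rightarrow> real" where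
  "mom n k = integral {-1..1} (\<lambda>x. poly (legendre n) x * x ^ k)"

lemma mom_rec: "mom (Suc (Suc n)) k = (real (2*n+3) * mom (Suc n) (Suc k) - real (n+1) * mom n k) / real (n+2)"
proof -
  have e: "(\<lambda>x. poly (legendre (Suc (Suc n))) x * x ^ k) =
     (\<lambda>x. (real (2*n+3) * (poly (legendre (Suc n)) x * x ^ Suc k) - real (n+1) * (poly (legendre n) x * x^k)) / real (n+2))"
    by (rule ext) (simp only: poly_legendre_rec, simp add: field_simps)
  show ?thesis unfolding mom_def e
    apply (simp only: integral_divide)
    apply (subst integral_diff)
      apply (intro integrable_continuous_interval continuous_intros)+
    apply (simp add: integral_mult_right)
    done
qed

lemma mom0: "mom 0 k = pint k" by (simp add: mom_def pint_def)
lemma mom1: "mom (Suc 0) k = pint (Suc k)" by (simp add: mom_def pint_def)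

lemma aux: fixes K M a :: real assumes "K \<ge> 0" "M \<ge> 0"
  shows "(K+1) * (((2*M+3) * a - (M+1) * ((K+M+3)*a/(K+1))) / (M+2)) = (K - M) * a"
proof -
  have k: "K+1 \<noteq> 0" and m: "M+2\<noteq>0" using assms by auto
  have "(K+1)*((2*M+3)*a - (M+1)*((K+M+3)*a/(K+1))) = (K+1)*((2*M+3)*a) - (M+1)*(K+M+3)*a"
    using k by (simp add: right_diff_distrib)
  also have "\<dots> = (M+2)*((K-M)*a)" by algebra
  finally show ?thesis using m by (simp add: mult.assoc[symmetric])
qed

lemma momC: "real (k+n+3) * mom (Suc n) (Suc k) = real (Suc k) * mom n k"
proof (induction n arbitrary: k rule: less_induct)
  case (less n)
  show ?case
  proof (cases n)
    case 0
    then show ?thesis by (simp add: mom0 mom1 pint_val field_simps)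
  next
    case (Suc n1)
    show ?thesis
    proof (cases n1)
      case 0
      have r: "mom 2 (Suc k) = (3 * mom 1 (Suc (Suc k)) - mom 0 (Suc k)) / 2"
        using mom_rec[of 0 "Suc k"] by (simp add: numeral_2_eq_2)
      have c0: "real (k+4) * mom 1 (Suc (Suc k)) = real (k+2) * mom 0 (Suc k)"
        using less[of 0 "Suc k"] Suc 0 by (simp add: add.commute)
      have "real (k+4) * mom 2 (Suc k) = real (Suc k) * mom 0 (Suc k)"
        unfolding r using c0 by (simp add: field_simps)
      moreover have "mom 1 k = mom 0 (Suc k)" by (simp add: mom0 mom1)
      ultimately show ?thesis using Suc 0 by (simp add: numeral_2_eq_2 add.commute)
    next
      case (Suc m)
      have hn: "n = Suc (Suc m)" using \<open>n = Suc n1\<close> Suc by simp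
      have IH1: "real (k+1+(m+1)+3) * mom (Suc (Suc m)) (Suc (Suc k)) = real (Suc (Suc k)) * mom (Suc m) (Suc k)"
        using less[of "Suc m" "Suc k"] hn by simp
      have IH0: "real (k+m+3) * mom (Suc m) (Suc k) = real (Suc k) * mom m k"
        using less[of m k] hn by simp
      have r1: "mom (Suc (Suc (Suc m))) (Suc k) = (real (2*m+5) * mom (Suc (Suc m)) (Suc (Suc k)) - real (m+2) * mom (Suc m) (Suc k)) / real (m+3)"
        using mom_rec[of "Suc m" "Suc k"] by (simp add: add.commute)
      have r2: "mom (Suc (Suc m)) k = (real (2*m+3) * mom (Suc m) (Suc k) - real (m+1) * mom m k) / real (m+2)"
        using mom_rec[of m k] by simp
      have L: "real (k+m+5) * mom (Suc (Suc (Suc m))) (Suc k) = (real k - real m) * mom (Suc m) (Suc k)"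
      proof -
        have "real (k+m+5) * mom (Suc (Suc m)) (Suc (Suc k)) = real (k+2) * mom (Suc m) (Suc k)"
          using IH1 by (simp add: add.commute add.left_commute)
        then show ?thesis unfolding r1 by (simp add: field_simps)
      qed
      have R: "real (Suc k) * mom (Suc (Suc m)) k = (real k - real m) * mom (Suc m) (Suc k)"
      proof -
        have mk: "mom m k = real (k+m+3) * mom (Suc m) (Suc k) / real (Suc k)"
          using IH0 by (simp add: field_simps)
        show ?thesis unfolding r2 mk using aux[of "real k" "real m" "mom (Suc m) (Suc k)"] by (simp add: algebra_simps)
      qed
      show ?thesis using L R hn by (simp add: add.commute add.left_commute)
    qed
  qed
qed

lemma mom_zero0: "mom (Suc n) 0 = 0"
proof (induction n rule: less_induct)
  case (less n)
  show ?case
  proof (cases n)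
    case 0 then show ?thesis by (simp add: mom1 pint_val)
  next
    case (Suc n1)
    have r: "mom (Suc (Suc n1)) 0 = (real (2*n1+3) * mom (Suc n1) 1 - real (n1+1) * mom n1 0) / real (n1+2)"
      using mom_rec[of n1 0] by simp
    have c: "real (n1+3) * mom (Suc n1) 1 = mom n1 0" using momC[of 0 n1] by (simp add: add.commute)
    show ?thesis
    proof (cases n1)
      case 0 then show ?thesis using c r Suc by simp
    next
      case (Suc n2)
      then have z: "mom n1 0 = 0" using less[of n2] \<open>n = Suc n1\<close> by simp
      then have "mom (Suc n1) 1 = 0" using c by simp
      then show ?thesis using r z \<open>n = Suc n1\<close> by simp
    qed
  qed
qed

lemma mom_vanish: "k < n \<Longrightarrow> mom n k = 0"
proof (induction n arbitrary: k)
  case 0 then show ?case by simp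
next
  case (Suc n)
  show ?case
  proof (cases k)
    case 0 then show ?thesis by (simp add: mom_zero0)
  next
    case (Suc k')
    then have "k' < n" using Suc.prems by simp
    then have "mom n k' = 0" using Suc.IH by simp
    then have "real (k'+n+3) * mom (Suc n) (Suc k') = 0" using momC[of k' n] by simp
    then show ?thesis using Suc by simp
  qed
qed

lemma legendre_orth:
  assumes "degree q < n"
  shows "integral {-1..1} (\<lambda>x. poly (legendre n) x * poly q x) = 0"
proof -
  have e: "(\<lambda>x. poly (legendre n) x * poly q x) = (\<lambda>x. \<Sum>i\<le>degree q. coeff q i * (poly (legendre n) x * x ^ i))"
    unfolding poly_altdef[of q] by (simp add: sum_distrib_left mult_ac)
  have "integral {-1..1} (\<lambda>x. \<Sum>i\<le>degree q. coeff q i * (poly (legendre n) x * x ^ i))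
        = (\<Sum>i\<le>degree q. integral {-1..1} (\<lambda>x. coeff q i * (poly (legendre n) x * x ^ i)))"
    by (rule integral_sum) (auto intro!: integrable_continuous_interval continuous_intros)
  also have "\<dots> = (\<Sum>i\<le>degree q. coeff q i * mom n i)"
    by (simp add: mom_def)
  also have "\<dots> = 0" using assms by (auto intro!: sum.neutral mom_vanish)
  finally show ?thesis unfolding e .
qed

lemma even_order_sign:
  fixes f :: "real poly"
  assumes "f \<noteq> 0" "\<forall>r. a < r \<and> r < b \<and> poly f r = 0 \<longrightarrow> even (order r f)"
  shows "(\<forall>x. a<x \<and> x<b \<longrightarrow> poly f x \<ge> 0) \<or> (\<forall>x. a<x \<and> x<b \<longrightarrow> poly f x \<le> 0)"
  using assms
proof (induction "card {r. a < r \<and> r < b \<and> poly f r = 0}" arbitrary: f rule: less_induct)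
  case less
  show ?case
  proof (cases "\<exists>r. a < r \<and> r < b \<and> poly f r = 0")
    case False
    show ?thesis
    proof (rule ccontr)
      assume "\<not> ?thesis"
      then obtain u v where u: "a<u" "u<b" "poly f u < 0" and v: "a<v" "v<b" "poly f v > 0"
        by (auto simp: not_le)
      have "u \<noteq> v" using u v by auto
      then consider "u < v" | "v < u" by linarith
      then show False
      proof cases
        case 1 then obtain x where "u<x" "x<v" "poly f x = 0" using poly_IVT_pos[of u v f] u v by auto
        then show False using False u v by auto
      next
        case 2 then obtain x where "v<x" "x<u" "poly f x = 0" using poly_IVT_neg[of v u f] u v by auto
        then show False using False u v by auto
      qed
    qed
  next
    case True
    then obtain r where r: "a < r" "r < b" "poly f r = 0" by auto
    have ev: "even (order r f)" using less.prems r by auto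
    then obtain k where k: "order r f = 2 * k" by auto
    obtain g where g: "f = [:-r,1:] ^ (2*k) * g" using order_1[of r f] k by (auto elim!: dvdE)
    have g0: "g \<noteq> 0" using g less.prems(1) by auto
    have pw0: "[:-r,1:] ^ (2*k) * g \<noteq> 0" using g less.prems(1) by simp
    have ordg: "order r' f = order r' ([:-r,1:] ^ (2*k)) + order r' g" for r'
      using order_mult[OF pw0, of r'] g by simp
    have gr: "poly g r \<noteq> 0"
    proof -
      have "order r g = 0" using ordg[of r] k by (simp add: order_power_n_n)
      then show ?thesis using g0 order_root by blast
    qed
    have ordne: "r' \<noteq> r \<Longrightarrow> order r' f = order r' g" for r'
    proof -
      assume "r' \<noteq> r"
      then have "poly ([:-r,1:] ^ (2*k)) r' \<noteq> 0" by simp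
      then have "order r' ([:-r,1:] ^ (2*k)) = 0" by (rule order_0I)
      then show ?thesis using ordg[of r'] by simp
    qed
    let ?Rf = "{r. a < r \<and> r < b \<and> poly f r = 0}"
    let ?Rg = "{r. a < r \<and> r < b \<and> poly g r = 0}"
    have sub: "?Rg \<subseteq> ?Rf - {r}" using gr g by auto
    have fin: "finite ?Rf" using poly_roots_finite[OF less.prems(1)] by (rule finite_subset[rotated]) auto
    have "card ?Rg < card ?Rf"
    proof -
      have "card ?Rg \<le> card (?Rf - {r})" using sub fin by (intro card_mono) auto
      also have "\<dots> < card ?Rf" using fin r by (intro card_Diff1_less) auto
      finally show ?thesis .
    qed
    moreover have "\<forall>r'. a < r' \<and> r' < b \<and> poly g r' = 0 \<longrightarrow> even (order r' g)"
    proof (intro allI impI)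
      fix r' assume h: "a < r' \<and> r' < b \<and> poly g r' = 0"
      then have "r' \<noteq> r" using gr by auto
      moreover have "poly f r' = 0" using h g by simp
      ultimately show "even (order r' g)" using less.prems(2) h ordne by metis
    qed
    ultimately have IH: "(\<forall>x. a<x \<and> x<b \<longrightarrow> poly g x \<ge> 0) \<or> (\<forall>x. a<x \<and> x<b \<longrightarrow> poly g x \<le> 0)"
      using less.hyps g0 by blast
    have pf: "poly f x = ((x - r) ^ k) ^ 2 * poly g x" for x
      using g by (simp add: power_mult mult.commute)
    show ?thesis
      using IH unfolding pf
      by (metis mult_nonneg_nonneg mult_nonneg_nonpos zero_le_power2)
  qed
qed

lemma cont_poly: "continuous_on S (poly (p::real poly))"
  using continuous_on_poly[OF continuous_on_id] by simp

lemma order_linprod: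
  fixes Z :: "real set"
  assumes "finite Z"
  shows "order r (\<Prod>z\<in>Z. [:-z,1:]) = (if r \<in> Z then 1 else 0)"
proof (cases "r \<in> Z")
  case True
  have e: "(\<Prod>z\<in>Z. [:-z,1:]) = [:-r,1:] * (\<Prod>z\<in>Z-{r}. [:-z,1:])"
    using assms True by (simp add: prod.remove)
  have nz: "(\<Prod>z\<in>Z-{r}. [:-z,1::real:]) \<noteq> 0" using assms by simp
  have "poly (\<Prod>z\<in>Z-{r}. [:-z,1:]) r \<noteq> 0" using assms by (simp add: poly_prod)
  then have o2: "order r (\<Prod>z\<in>Z-{r}. [:-z,1:]) = 0" by (rule order_0I)
  have o1: "order r [:-r,1::real:] = 1" using order_power_n_n[of r 1] by simp
  have nz2: "[:-r,1::real:] * (\<Prod>z\<in>Z-{r}. [:-z,1:]) \<noteq> 0"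
    using nz by (metis mult_eq_0_iff pCons_eq_0_iff one_neq_zero)
  have "order r (\<Prod>z\<in>Z. [:-z,1:]) = 1" unfolding e
    using order_mult[OF nz2, of r] o1 o2 by simp
  then show ?thesis using True by simp
next
  case False
  have "poly (\<Prod>z\<in>Z. [:-z,1:]) r \<noteq> 0" using assms False by (auto simp add: poly_prod)
  then show ?thesis using False order_0I by auto
qed

lemma legendre_roots:
  assumes N: "N \<ge> 1"
  shows "card {x. poly (legendre N) x = 0} = N" "{x. poly (legendre N) x = 0} \<subseteq> {-1<..<1}"
proof -
  let ?P = "legendre N"
  define Z where "Z = {r. -1 < r \<and> r < 1 \<and> poly ?P r = 0 \<and> odd (order r ?P)}"
  let ?R = "{x. poly ?P x = 0}"
  have finR: "finite ?R" using poly_roots_finite[OF legendre_ne0] .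
  have ZR: "Z \<subseteq> ?R" unfolding Z_def by auto
  have finZ: "finite Z" using finite_subset[OF ZR finR] .
  define q where "q = (\<Prod>z\<in>Z. [:-z,1::real:])"
  have dq: "degree q = card Z" unfolding q_def by (subst degree_prod_sum_eq) auto
  have q0: "q \<noteq> 0" unfolding q_def using finZ by simp
  have cardZ: "card Z \<ge> N"
  proof (rule ccontr)
    assume "\<not> card Z \<ge> N"
    then have "degree q < N" using dq by simp
    from legendre_orth[OF this] have I0: "integral {-1..1} (\<lambda>x. poly (?P * q) x) = 0" by simp
    have int: "(\<lambda>x. poly (?P * q) x) integrable_on {-1..1::real}"
      by (intro integrable_continuous_interval continuous_intros)
    define f where "f = ?P * q"
    have f0: "f \<noteq> 0" unfolding f_def using q0 legendre_ne0 by simp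
    have ordf: "order r f = order r ?P + (if r \<in> Z then 1 else 0)" for r
      unfolding f_def using order_mult[OF f0[unfolded f_def], of r] order_linprod[OF finZ, of r] q_def by simp
    have evf: "\<forall>r. -1 < r \<and> r < 1 \<and> poly f r = 0 \<longrightarrow> even (order r f)"
    proof (intro allI impI)
      fix r assume h: "-1 < r \<and> r < 1 \<and> poly f r = 0"
      show "even (order r f)"
      proof (cases "r \<in> Z")
        case True then show ?thesis unfolding ordf Z_def by simp
      next
        case False
        then have "poly q r \<noteq> 0" unfolding q_def using finZ by (auto simp: poly_prod)
        then have "poly ?P r = 0" using h unfolding f_def by simp
        then show ?thesis using False h unfolding ordf Z_def by auto
      qed
    qed
    have hf: "(poly f has_integral 0) {-1..1}"
    proof -
      have e: "poly f = (\<lambda>x. poly ?P x * poly q x)" by (auto simp: f_def)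
      show ?thesis using integrable_integral[OF int] I0 unfolding e by simp
    qed
    have "\<forall>x\<in>{-1..1}. poly f x = 0"
    proof -
      from even_order_sign[OF f0 evf] show ?thesis
      proof
        assume pos: "\<forall>x. -1<x \<and> x<1 \<longrightarrow> poly f x \<ge> 0"
        show ?thesis
        proof
          fix x :: real assume x: "x \<in> {-1..1}"
          show "poly f x = 0"
            by (rule has_integral_0_cbox_imp_0[of "-1" 1 "poly f"]) (use pos hf x cont_poly in auto)
        qed
      next
        assume neg: "\<forall>x. -1<x \<and> x<1 \<longrightarrow> poly f x \<le> 0"
        have e': "poly (-f) = (\<lambda>x. - poly f x)" by auto
        have hf': "(poly (-f) has_integral 0) {-1..1}" using has_integral_neg[OF hf] unfolding e' by simp
        show ?thesis
        proof
          fix x :: real assume x: "x \<in> {-1..1}"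
          have "poly (-f) x = 0"
            by (rule has_integral_0_cbox_imp_0[of "-1" 1 "poly (-f)"]) (use neg hf' x cont_poly[of _ "-f"] in auto)
          then show "poly f x = 0" by simp
        qed
      qed
    qed
    then have "{-1..1} \<subseteq> {x. poly f x = 0}" by auto
    moreover have "finite {x. poly f x = 0}" using poly_roots_finite[OF f0] .
    ultimately have "finite {-1..1::real}" by (rule finite_subset)
    moreover have "\<not> finite {-1..1::real}" by (rule infinite_Icc) simp
    ultimately show False by blast
  qed
  have cR: "card ?R \<le> N" using card_poly_roots_bound[OF legendre_ne0[of N]] degree_legendre by simp
  have cZR: "card Z \<le> card ?R" using card_mono[OF finR ZR] .
  show "card ?R = N" using cR cZR cardZ by simp
  have "card Z = card ?R" using cR cZR cardZ by linarith
  then have "Z = ?R" by (rule card_subset_eq[OF finR ZR])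
  moreover have "Z \<subseteq> {-1<..<1}" unfolding Z_def by auto
  ultimately show "?R \<subseteq> {-1<..<1}" by simp
qed


lemma tau_facts:
  assumes N: "N \<ge> 1"
  shows "\<forall>i\<in>{1..N}. poly (legendre N) (gauss_tau N i) = 0 \<and> gauss_tau N i \<in> {-1<..<1}"
    and "inj_on (gauss_tau N) {1..N}"
    and "gauss_tau N ` {1..N} = {x. poly (legendre N) x = 0}"
proof -
  let ?R = "{x. poly (legendre N) x = 0}"
  let ?xs = "sorted_list_of_set ?R"
  have finR: "finite ?R" using poly_roots_finite[OF legendre_ne0] .
  have len: "length ?xs = N" using legendre_roots(1)[OF N] by simp
  have setx: "set ?xs = ?R" using finR by simp
  have dist: "distinct ?xs" by simp
  have tau: "gauss_tau N i = ?xs ! (i - 1)" if "i \<in> {1..N}" for i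
    using that by (simp add: gauss_tau_def)
  show "\<forall>i\<in>{1..N}. poly (legendre N) (gauss_tau N i) = 0 \<and> gauss_tau N i \<in> {-1<..<1}"
  proof
    fix i assume i: "i \<in> {1..N}"
    have "i - 1 < length ?xs" using i len by auto
    then have "?xs ! (i-1) \<in> set ?xs" by (rule nth_mem)
    then have "?xs ! (i-1) \<in> ?R" using setx by simp
    then show "poly (legendre N) (gauss_tau N i) = 0 \<and> gauss_tau N i \<in> {-1<..<1}"
      using tau[OF i] legendre_roots(2)[OF N] by auto
  qed
  show "inj_on (gauss_tau N) {1..N}"
  proof
    fix i j assume i: "i \<in> {1..N}" and j: "j \<in> {1..N}" and e: "gauss_tau N i = gauss_tau N j"
    then have "?xs ! (i-1) = ?xs ! (j-1)" using tau by simp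
    moreover have "i - 1 < length ?xs" "j - 1 < length ?xs" using i j len by auto
    ultimately have "i - 1 = j - 1" using nth_eq_iff_index_eq[OF dist] by blast
    then show "i = j" using i j by auto
  qed
  show "gauss_tau N ` {1..N} = ?R"
  proof
    show "gauss_tau N ` {1..N} \<subseteq> ?R"
    proof
      fix x assume "x \<in> gauss_tau N ` {1..N}"
      then obtain i where i: "i \<in> {1..N}" "x = gauss_tau N i" by blast
      have "i - 1 < length ?xs" using i len by auto
      then have "?xs ! (i-1) \<in> set ?xs" by (rule nth_mem)
      then show "x \<in> ?R" using i tau setx by simp
    qed
    show "?R \<subseteq> gauss_tau N ` {1..N}"
    proof
      fix x assume "x \<in> ?R"
      then have "x \<in> set ?xs" using setx by simp
      then obtain k where k: "k < length ?xs" "?xs ! k = x" by (auto simp: in_set_conv_nth)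
      have "Suc k \<in> {1..N}" using k len by simp
      moreover have "gauss_tau N (Suc k) = x" using tau[OF \<open>Suc k \<in> {1..N}\<close>] k by simp
      ultimately show "x \<in> gauss_tau N ` {1..N}" by blast
    qed
  qed
qed

lemma poly_lagrange:
  "poly (lagrange_basis N K j) x = (\<Prod>k\<in>K - {j}. (x - gauss_tau N k) / (gauss_tau N j - gauss_tau N k))"
  by (simp add: lagrange_basis_def poly_prod diff_divide_distrib)

lemma degree_lagrange:
  assumes "finite K"
  shows "degree (lagrange_basis N K j) \<le> card (K - {j})"
proof -
  let ?f = "\<lambda>k. smult (1 / (gauss_tau N j - gauss_tau N k)) [:- gauss_tau N k, 1::real:]"
  have "degree (lagrange_basis N K j) \<le> sum (degree \<circ> ?f) (K - {j})"
    unfolding lagrange_basis_def using assms by (intro degree_prod_sum_le) simp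
  also have "\<dots> \<le> (\<Sum>k\<in>K - {j}. 1)"
  proof (rule sum_mono)
    fix k show "(degree \<circ> ?f) k \<le> 1" unfolding o_def by (rule order_trans[OF degree_smult_le]) simp
  qed
  finally show ?thesis by simp
qed

lemma weight_pos:
  assumes N: "N \<ge> 1" and i: "i \<in> {1..N}"
  shows "gauss_weight N i > 0"
proof -
  let ?P = "legendre N"
  let ?t = "gauss_tau N"
  define L where "L = lagrange_basis N {1..N} i"
  note tf = tau_facts[OF N]
  have Lt: "poly L (?t m) = (if m = i then 1 else 0)" if m: "m \<in> {1..N}" for m
  proof (cases "m = i")
    case True
    have "?t i \<noteq> ?t k" if "k \<in> {1..N} - {i}" for k
      using tf(2) i that by (auto dest: inj_onD)
    then show ?thesis unfolding L_def poly_lagrange using True by (auto intro!: prod.neutral)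
  next
    case False
    have "(\<Prod>k\<in>{1..N} - {i}. (?t m - ?t k) / (?t i - ?t k)) = 0"
      by (rule prod_zero) (use m False in auto)
    then show ?thesis unfolding L_def poly_lagrange using False by simp
  qed
  have dL: "degree L \<le> N - 1" unfolding L_def using degree_lagrange[of "{1..N}" N i] i by simp
  define r where "r = L * L - L"
  have dr: "degree r \<le> 2 * N - 2"
  proof -
    have "degree (L * L) \<le> 2 * N - 2" using degree_mult_le[of L L] dL by simp
    moreover have "degree L \<le> 2 * N - 2" using dL by simp
    ultimately show ?thesis unfolding r_def by (rule degree_diff_le)
  qed
  have P0: "?P \<noteq> 0" by (rule legendre_ne0)
  have rr: "poly r x = 0" if "poly ?P x = 0" for x
  proof -
    from that tf(3) have "x \<in> ?t ` {1..N}" by simp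
    then obtain m where m: "m \<in> {1..N}" "x = ?t m" by blast
    then show ?thesis unfolding r_def using Lt[OF m(1)] by simp
  qed
  have modz: "r mod ?P = 0"
  proof (rule ccontr)
    assume nz: "r mod ?P \<noteq> 0"
    have "{x. poly ?P x = 0} \<subseteq> {x. poly (r mod ?P) x = 0}"
    proof
      fix x assume "x \<in> {x. poly ?P x = 0}"
      then have "poly ?P x = 0" by simp
      moreover have "poly r x = poly (r div ?P) x * poly ?P x + poly (r mod ?P) x"
      proof -
        have e: "poly r x = poly (r div ?P * ?P + r mod ?P) x" using div_mult_mod_eq[of r ?P] by simp
        show ?thesis by (simp only: e poly_add poly_mult)
      qed
      ultimately show "x \<in> {x. poly (r mod ?P) x = 0}" using rr[of x] by simp
    qed
    then have "card {x. poly ?P x = 0} \<le> card {x. poly (r mod ?P) x = 0}"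
      using poly_roots_finite[OF nz] by (intro card_mono)
    also have "\<dots> \<le> degree (r mod ?P)" by (rule card_poly_roots_bound[OF nz])
    also have "\<dots> < degree ?P" by (rule degree_mod_less'[OF P0 nz])
    finally show False using legendre_roots(1)[OF N] degree_legendre by simp
  qed
  define d where "d = r div ?P"
  have rP: "r = ?P * d" unfolding d_def using div_mult_mod_eq[of r ?P] modz by (simp add: mult.commute)
  have dd: "degree d < N"
  proof (cases "d = 0")
    case True then show ?thesis using N by simp
  next
    case False
    then have "degree r = N + degree d" unfolding rP using P0 by (simp add: degree_mult_eq degree_legendre)
    then show ?thesis using dr N by linarith
  qed
  have "integral {-1..1} (\<lambda>x. poly ?P x * poly d x) = 0" by (rule legendre_orth[OF dd])
  moreover have "(\<lambda>x. poly ?P x * poly d x) = (\<lambda>x. poly L x * poly L x - poly L x)"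
  proof
    fix x
    have "poly r x = poly ?P x * poly d x" unfolding rP by simp
    then show "poly ?P x * poly d x = poly L x * poly L x - poly L x" unfolding r_def by simp
  qed
  ultimately have I0: "integral {-1..1} (\<lambda>x. poly L x * poly L x - poly L x) = 0" by simp
  have iL: "(poly L) integrable_on {-1..1::real}" using cont_poly by (intro integrable_continuous_interval)
  have iL2: "(\<lambda>x. poly L x * poly L x) integrable_on {-1..1::real}"
    by (intro integrable_continuous_interval continuous_intros)
  have eq: "integral {-1..1} (\<lambda>x. poly L x * poly L x) = integral {-1..1} (poly L)"
    using I0 integral_diff[OF iL2 iL] by simp
  have ge: "integral {-1..1} (\<lambda>x. poly L x * poly L x) \<ge> 0"
    by (rule integral_nonneg[OF iL2]) simp
  have ne: "integral {-1..1} (\<lambda>x. poly L x * poly L x) \<noteq> 0"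
  proof
    assume z: "integral {-1..1} (\<lambda>x. poly L x * poly L x) = 0"
    have hz: "((\<lambda>x. poly L x * poly L x) has_integral 0) {-1..1}"
      using integrable_integral[OF iL2] z by simp
    have "?t i \<in> {-1<..<1}" using tf(1) i by blast
    then have ti: "?t i \<in> {-1..1}" by auto
    have "poly L (?t i) * poly L (?t i) = 0"
      by (rule has_integral_0_cbox_imp_0[of "-1" 1 "\<lambda>x. poly L x * poly L x"])
         (use hz ti in \<open>auto intro!: continuous_intros\<close>)
    then show False using Lt[OF i] by simp
  qed
  have "integral {-1..1} (poly L) > 0" using eq ge ne by simp
  then show ?thesis unfolding gauss_weight_def L_def by simp
qed


lemma quad_zero:
  fixes b c :: real
  assumes c: "c \<ge> 0" and h: "\<And>t. 2 * t * b + t^2 * c \<ge> 0"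
  shows "b = 0"
proof (rule ccontr)
  assume b: "b \<noteq> 0"
  define s where "s = 1 / (c + 1)"
  define t where "t = - b * s"
  have c1: "c + 1 > 0" using c by simp
  have s0: "s > 0" unfolding s_def using c1 by simp
  have sc: "s * c = 1 - s" unfolding s_def using c1 by (simp add: field_simps)
  have "2 * t * b + t ^ 2 * c = b ^ 2 * s * (s * c) - 2 * b ^ 2 * s" by (simp add: t_def power2_eq_square algebra_simps)
  also have "\<dots> = b ^ 2 * s * (1 - s) - 2 * b ^ 2 * s" using sc by simp
  also have "\<dots> = - (b^2 * s * (1+s))" by (simp add: algebra_simps)
  finally have e: "2 * t * b + t^2 * c = - (b^2 * s * (1+s))" .
  have "b^2 * s * (1+s) > 0" using b s0 by simp
  then have "2 * t * b + t^2 * c < 0" using e by simp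
  then show False using h[of t] by simp
qed

lemma sym_dot:
  fixes M :: "real^'k^'k"
  assumes "transpose M = M"
  shows "w \<bullet> (M *v v) = v \<bullet> (M *v w)"
proof -
  have "w \<bullet> (M *v v) = (w v* M) \<bullet> v" by (simp add: dot_lmul_matrix)
  also have "w v* M = transpose M *v w" by simp
  also have "\<dots> = M *v w" using assms by simp
  finally show ?thesis by (simp add: inner_commute)
qed

lemma pd_from_eig:
  fixes M :: "real^'k^'k"
  assumes sym: "transpose M = M" and eig: "\<forall>\<mu>. is_eigenvalue M \<mu> \<longrightarrow> \<mu> > 0"
    and v: "v \<noteq> 0"
  shows "v \<bullet> (M *v v) > 0"
proof -
  define q where "q x = x \<bullet> (M *v x)" for x
  have cq: "continuous_on (sphere 0 1) q" unfolding q_def by (intro continuous_intros)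
  have ne: "sphere (0::real^'k) 1 \<noteq> {}"
  proof -
    obtain x :: "real^'k" where "norm x = 1" using vector_choose_size[of 1] by auto
    then show ?thesis by (auto simp: sphere_def dist_norm)
  qed
  obtain v0 where v0: "v0 \<in> sphere 0 1" and mn: "\<forall>y\<in>sphere 0 1. q v0 \<le> q y"
    using continuous_attains_inf[OF compact_sphere ne cq] by blast
  define \<mu> where "\<mu> = q v0"
  have nv0: "norm v0 = 1" using v0 by simp
  have vv0: "v0 \<bullet> v0 = 1" using nv0 by (simp add: dot_square_norm)
  have qscale: "q (c *\<^sub>R x) = c^2 * q x" for c x
    unfolding q_def by (simp add: matrix_vector_mult_scaleR power2_eq_square)
  have lower: "q x \<ge> \<mu> * (x \<bullet> x)" for x
  proof (cases "x = 0")
    case True then show ?thesis by (simp add: q_def)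
  next
    case False
    define u where "u = (1 / norm x) *\<^sub>R x"
    have "u \<in> sphere 0 1" unfolding u_def using False by simp
    then have "\<mu> \<le> q u" using mn \<mu>_def by blast
    moreover have "x = norm x *\<^sub>R u" unfolding u_def using False by simp
    then have "q x = (norm x)^2 * q u" by (metis qscale)
    moreover have "x \<bullet> x = (norm x)^2" by (simp add: dot_square_norm)
    ultimately show ?thesis using mult_right_mono[of \<mu> "q u" "(norm x)^2"] by (simp add: mult.commute)
  qed
  have eigv: "M *v v0 = \<mu> *\<^sub>R v0"
  proof -
    define w where "w = M *v v0 - \<mu> *\<^sub>R v0"
    have c: "q w - \<mu> * (w \<bullet> w) \<ge> 0" using lower[of w] by simp
    have "2 * t * (w \<bullet> (M *v v0) - \<mu> * (w \<bullet> v0)) + t^2 * (q w - \<mu> * (w \<bullet> w)) \<ge> 0" for t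
    proof -
      have ge: "q (v0 + t *\<^sub>R w) - \<mu> * ((v0 + t *\<^sub>R w) \<bullet> (v0 + t *\<^sub>R w)) \<ge> 0"
        using lower[of "v0 + t *\<^sub>R w"] by simp
      have eA: "q (v0 + t *\<^sub>R w) = \<mu> + 2 * t * (w \<bullet> (M *v v0)) + t^2 * q w"
        unfolding q_def \<mu>_def using sym_dot[OF sym, of w v0]
        by (simp add: matrix_vector_right_distrib matrix_vector_mult_scaleR inner_add_left inner_add_right
                      power2_eq_square algebra_simps)
      have eB: "(v0 + t *\<^sub>R w) \<bullet> (v0 + t *\<^sub>R w) = 1 + 2 * t * (w \<bullet> v0) + t^2 * (w \<bullet> w)"
        using vv0 by (simp add: inner_add_left inner_add_right inner_commute power2_eq_square algebra_simps)
      have "q (v0 + t *\<^sub>R w) - \<mu> * ((v0 + t *\<^sub>R w) \<bullet> (v0 + t *\<^sub>R w))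
          = 2 * t * (w \<bullet> (M *v v0) - \<mu> * (w \<bullet> v0)) + t^2 * (q w - \<mu> * (w \<bullet> w))"
        by (simp only: eA eB) (simp add: algebra_simps)
      then show ?thesis using ge by simp
    qed
    then have "w \<bullet> (M *v v0) - \<mu> * (w \<bullet> v0) = 0" using quad_zero[OF c] by blast
    then have "w \<bullet> w = 0" unfolding w_def by (simp add: inner_diff_left inner_diff_right algebra_simps)
    then show ?thesis unfolding w_def by simp
  qed
  have "v0 \<noteq> 0" using nv0 by auto
  then have "is_eigenvalue M \<mu>" unfolding is_eigenvalue_def using eigv by blast
  then have "\<mu> > 0" using eig by blast
  moreover have "v \<bullet> v > 0" using v by simp
  ultimately have "\<mu> * (v \<bullet> v) > 0" by simp
  then show ?thesis using lower[of v] unfolding q_def by simp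
qed


lemma dot_transpose: "x \<bullet> (transpose A *v y) = y \<bullet> (A *v (x::real^'a)) " for A :: "real^'a^'b"
proof -
  have "x \<bullet> (transpose A *v y) = x \<bullet> (y v* A)" by simp
  also have "\<dots> = (y v* A) \<bullet> x" by (simp add: inner_commute)
  also have "\<dots> = y \<bullet> (A *v x)" by (rule dot_lmul_matrix)
  finally show ?thesis .
qed

definition n1 :: "real^'a \<Rightarrow> real" where "n1 v = (\<Sum>a\<in>UNIV. \<bar>v $ a\<bar>)"

lemma n1_nonneg: "n1 v \<ge> 0" unfolding n1_def by (simp add: sum_nonneg)

lemma n1_zero: "n1 v = 0 \<Longrightarrow> v = 0"
  unfolding n1_def by (subst (asm) sum_nonneg_eq_0_iff) (auto simp: vec_eq_iff)

lemma n1_sum: "finite I \<Longrightarrow> n1 (\<Sum>i\<in>I. c i *\<^sub>R v i) \<le> (\<Sum>i\<in>I. \<bar>c i\<bar> * n1 (v i))"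
proof -
  assume fI: "finite I"
  have "n1 (\<Sum>i\<in>I. c i *\<^sub>R v i) = (\<Sum>a\<in>UNIV. \<bar>\<Sum>i\<in>I. c i * v i $ a\<bar>)"
    unfolding n1_def by (simp add: sum_component)
  also have "\<dots> \<le> (\<Sum>a\<in>UNIV. \<Sum>i\<in>I. \<bar>c i\<bar> * \<bar>v i $ a\<bar>)"
    by (intro sum_mono) (metis (no_types, lifting) abs_mult sum_abs sum.cong)
  also have "\<dots> = (\<Sum>i\<in>I. \<bar>c i\<bar> * n1 (v i))"
    unfolding n1_def by (subst sum.swap) (simp add: sum_distrib_left)
  finally show ?thesis .
qed

lemma n1_transpose:
  fixes A :: "real^'a^'a"
  shows "n1 (transpose A *v v) \<le> inf_norm A * n1 v"
proof -
  have row: "(\<Sum>b\<in>UNIV. \<bar>A $ a $ b\<bar>) \<le> inf_norm A" for a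
    unfolding inf_norm_def by (rule Max_ge) auto
  have "n1 (transpose A *v v) = (\<Sum>b\<in>UNIV. \<bar>\<Sum>a\<in>UNIV. A $ a $ b * v $ a\<bar>)"
    unfolding n1_def by (simp add: vector_matrix_mult_def mult.commute)
  also have "\<dots> \<le> (\<Sum>b\<in>UNIV. \<Sum>a\<in>UNIV. \<bar>A $ a $ b\<bar> * \<bar>v $ a\<bar>)"
    by (intro sum_mono) (metis (no_types, lifting) abs_mult sum_abs sum.cong)
  also have "\<dots> = (\<Sum>a\<in>UNIV. \<bar>v $ a\<bar> * (\<Sum>b\<in>UNIV. \<bar>A $ a $ b\<bar>))"
    by (subst sum.swap) (simp add: sum_distrib_left mult.commute)
  also have "\<dots> \<le> (\<Sum>a\<in>UNIV. \<bar>v $ a\<bar> * inf_norm A)"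
    by (intro sum_mono mult_left_mono row) simp
  also have "\<dots> = inf_norm A * n1 v" unfolding n1_def by (simp add: sum_distrib_left mult.commute)
  finally show ?thesis .
qed

lemma ddag1: "i \<in> {1..N} \<Longrightarrow> j \<in> {1..N} \<Longrightarrow> gauss_weight N i \<noteq> 0 \<Longrightarrow>
   gauss_weight N i * Ddag N i j = - (gauss_weight N j * Dmat N j i)"
  unfolding Ddag_def by auto

lemma ddag2: "gauss_weight N i \<noteq> 0 \<Longrightarrow>
   gauss_weight N i * Ddag N i (N+1) = (\<Sum>l=1..N. gauss_weight N l * Dmat N l i)"
  unfolding Ddag_def by (simp add: sum_distrib_left sum_negf)

lemma adjoint_identity:
  fixes X L a :: "nat \<Rightarrow> real^'n"
  assumes w: "\<forall>i\<in>{1..N}. gauss_weight N i \<noteq> 0"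
    and e1: "\<forall>i\<in>{1..N}. (\<Sum>j=1..N. Dmat N i j *\<^sub>R X j) = a i"
    and e2: "X (N+1) = (\<Sum>j=1..N. gauss_weight N j *\<^sub>R a j)"
  shows "(\<Sum>i=1..N. gauss_weight N i * (X i \<bullet> (\<Sum>j=1..N+1. Ddag N i j *\<^sub>R L j)))
       = - (\<Sum>j=1..N. gauss_weight N j * (L j \<bullet> a j)) + X (N+1) \<bullet> L (N+1)"
proof -
  let ?w = "gauss_weight N"
  have split: "X i \<bullet> (\<Sum>j=1..N+1. Ddag N i j *\<^sub>R L j)
      = (\<Sum>j=1..N. Ddag N i j * (X i \<bullet> L j)) + Ddag N i (N+1) * (X i \<bullet> L (N+1))" for i
    by (simp add: inner_sum_right inner_add_right)
  have "(\<Sum>i=1..N. ?w i * (X i \<bullet> (\<Sum>j=1..N+1. Ddag N i j *\<^sub>R L j)))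
      = (\<Sum>i=1..N. \<Sum>j=1..N. (?w i * Ddag N i j) * (X i \<bullet> L j))
        + (\<Sum>i=1..N. (?w i * Ddag N i (N+1)) * (X i \<bullet> L (N+1)))"
    unfolding split by (simp add: sum.distrib sum_distrib_left algebra_simps)
  also have "(\<Sum>i=1..N. \<Sum>j=1..N. (?w i * Ddag N i j) * (X i \<bullet> L j))
      = (\<Sum>i=1..N. \<Sum>j=1..N. - (?w j * Dmat N j i) * (X i \<bullet> L j))"
    using w by (intro sum.cong refl) (simp add: ddag1)
  also have "\<dots> = - (\<Sum>j=1..N. ?w j * (L j \<bullet> (\<Sum>i=1..N. Dmat N j i *\<^sub>R X i)))"
    by (subst sum.swap) (simp add: inner_sum_right sum_distrib_left sum_negf inner_commute mult.assoc)
  also have "\<dots> = - (\<Sum>j=1..N. ?w j * (L j \<bullet> a j))"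
    using e1 by simp
  also have "(\<Sum>i=1..N. (?w i * Ddag N i (N+1)) * (X i \<bullet> L (N+1)))
      = (\<Sum>i=1..N. (\<Sum>l=1..N. ?w l * Dmat N l i) * (X i \<bullet> L (N+1)))"
  proof (intro sum.cong refl)
    fix i assume "i \<in> {1..N}"
    then show "?w i * Ddag N i (N+1) * (X i \<bullet> L (N+1)) = (\<Sum>l=1..N. ?w l * Dmat N l i) * (X i \<bullet> L (N+1))"
      using w ddag2[of N i] by simp
  qed
  also have "\<dots> = (\<Sum>l=1..N. ?w l * ((\<Sum>i=1..N. Dmat N l i *\<^sub>R X i) \<bullet> L (N+1)))"
    by (simp add: sum_distrib_right sum_distrib_left inner_sum_left mult.assoc) (rule sum.swap)
  also have "\<dots> = (\<Sum>l=1..N. ?w l * (a l \<bullet> L (N+1)))"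
    using e1 by simp
  also have "\<dots> = X (N+1) \<bullet> L (N+1)"
    unfolding e2 by (simp add: inner_sum_left)
  finally show ?thesis .
qed

lemma kernel_zero:
  fixes X L :: "nat \<Rightarrow> real^'n" and U :: "nat \<Rightarrow> real^'m"
    and A :: "nat \<Rightarrow> real^'n^'n" and Q :: "nat \<Rightarrow> real^'n^'n"
    and B :: "nat \<Rightarrow> real^'m^'n" and S :: "nat \<Rightarrow> real^'m^'n"
    and R :: "nat \<Rightarrow> real^'m^'m" and T :: "real^'n^'n"
  assumes wpos: "\<forall>i\<in>{1..N}. gauss_weight N i > 0"
    and pdB: "\<forall>i\<in>{1..N}. \<forall>x u. (x \<noteq> 0 \<or> u \<noteq> 0) \<longrightarrow>
               x \<bullet> (Q i *v x) + x \<bullet> (S i *v u) + u \<bullet> (transpose (S i) *v x) + u \<bullet> (R i *v u) > 0"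
    and psdT: "\<forall>x. x \<bullet> (T *v x) \<ge> 0"
    and Anorm: "\<forall>i\<in>{1..N}. inf_norm (A i) \<le> 1/4"
    and E: "\<forall>i\<in>{1..N}. \<forall>j\<in>{1..N}. (\<Sum>k=1..N. Dmat N i k * E k j) = (if i = j then 1 else 0)"
           "\<forall>i\<in>{1..N}. (\<Sum>j=1..N. \<bar>E i j\<bar>) \<le> 2"
    and eq1: "\<forall>i\<in>{1..N}. (\<Sum>j=1..N. Dmat N i j *\<^sub>R X j) - A i *v X i - B i *v U i = 0"
    and eq2: "X (N+1) - (\<Sum>j=1..N. gauss_weight N j *\<^sub>R (A j *v X j + B j *v U j)) = 0"
    and eq5: "\<forall>i\<in>{1..N}. transpose (S i) *v X i + R i *v U i + transpose (B i) *v L i = 0"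
    and eq3: "\<forall>i\<in>{1..N}. (\<Sum>j=1..N+1. Ddag N i j *\<^sub>R L j) + transpose (A i) *v L i + Q i *v X i + S i *v U i = 0"
    and eq4: "L (N+1) - T *v X (N+1) = 0"
  shows "\<forall>i\<in>{1..N}. X i = 0 \<and> U i = 0 \<and> L i = 0" "X (N+1) = 0" "L (N+1) = 0"
proof -
  let ?w = "gauss_weight N"
  define a where "a i = A i *v X i + B i *v U i" for i
  define q where "q i = X i \<bullet> (Q i *v X i) + X i \<bullet> (S i *v U i) + U i \<bullet> (transpose (S i) *v X i) + U i \<bullet> (R i *v U i)" for i
  have w0: "\<forall>i\<in>{1..N}. ?w i \<noteq> 0" using wpos by auto
  have e1: "\<forall>i\<in>{1..N}. (\<Sum>j=1..N. Dmat N i j *\<^sub>R X j) = a i"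
    using eq1 unfolding a_def by (auto simp: algebra_simps)
  have e2: "X (N+1) = (\<Sum>j=1..N. ?w j *\<^sub>R a j)" using eq2 unfolding a_def by simp
  have e4: "L (N+1) = T *v X (N+1)" using eq4 by simp
  have adj: "(\<Sum>i=1..N. ?w i * (X i \<bullet> (\<Sum>j=1..N+1. Ddag N i j *\<^sub>R L j)))
       = - (\<Sum>j=1..N. ?w j * (L j \<bullet> a j)) + X (N+1) \<bullet> L (N+1)"
    by (rule adjoint_identity[OF w0 e1 e2])
  have qi: "q i = - (X i \<bullet> (\<Sum>j=1..N+1. Ddag N i j *\<^sub>R L j)) - L i \<bullet> a i" if i: "i \<in> {1..N}" for i
  proof -
    have h3: "X i \<bullet> ((\<Sum>j=1..N+1. Ddag N i j *\<^sub>R L j) + transpose (A i) *v L i + Q i *v X i + S i *v U i) = 0"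
      using eq3 i by simp
    have h5: "U i \<bullet> (transpose (S i) *v X i + R i *v U i + transpose (B i) *v L i) = 0"
      using eq5 i by simp
    have t1: "X i \<bullet> (transpose (A i) *v L i) = L i \<bullet> (A i *v X i)" by (rule dot_transpose)
    have t2: "U i \<bullet> (transpose (B i) *v L i) = L i \<bullet> (B i *v U i)" by (rule dot_transpose)
    show ?thesis using h3 h5 t1 t2 unfolding q_def a_def
      by (simp add: inner_add_right algebra_simps)
  qed
  have energy: "(\<Sum>i=1..N. ?w i * q i) + X (N+1) \<bullet> (T *v X (N+1)) = 0"
  proof -
    have "(\<Sum>i=1..N. ?w i * q i) = (\<Sum>i=1..N. - (?w i * (X i \<bullet> (\<Sum>j=1..N+1. Ddag N i j *\<^sub>R L j))) - ?w i * (L i \<bullet> a i))"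
      by (intro sum.cong refl) (simp add: qi algebra_simps)
    also have "\<dots> = - (\<Sum>i=1..N. ?w i * (X i \<bullet> (\<Sum>j=1..N+1. Ddag N i j *\<^sub>R L j))) - (\<Sum>i=1..N. ?w i * (L i \<bullet> a i))"
      by (simp add: sum_subtractf sum_negf)
    also have "\<dots> = - (X (N+1) \<bullet> L (N+1))" unfolding adj by simp
    finally show ?thesis using e4 by simp
  qed
  have qnn: "q i \<ge> 0" if "i \<in> {1..N}" for i
  proof (cases "X i = 0 \<and> U i = 0")
    case True then show ?thesis unfolding q_def by simp
  next
    case False then show ?thesis using pdB that unfolding q_def by (meson less_imp_le)
  qed
  have nn: "\<forall>i\<in>{1..N}. 0 \<le> ?w i * q i" using qnn wpos by (simp add: less_imp_le)
  have sum0: "(\<Sum>i=1..N. ?w i * q i) = 0"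
  proof -
    have "0 \<le> (\<Sum>i=1..N. ?w i * q i)" using nn by (intro sum_nonneg) auto
    then show ?thesis using energy psdT[rule_format, of "X (N+1)"] by linarith
  qed
  have XU: "X i = 0 \<and> U i = 0" if i: "i \<in> {1..N}" for i
  proof -
    have "?w i * q i = 0" using sum0 nn sum_nonneg_eq_0_iff[of "{1..N}" "\<lambda>i. ?w i * q i"] i by auto
    moreover have "?w i > 0" using wpos i by blast
    ultimately have "q i = 0" by simp
    show ?thesis
    proof (rule ccontr)
      assume "\<not> (X i = 0 \<and> U i = 0)"
      then have "q i > 0" using pdB i unfolding q_def by blast
      then show False using \<open>q i = 0\<close> by simp
    qed
  qed
  have a0: "\<forall>i\<in>{1..N}. a i = 0" using XU unfolding a_def by simp
  have XN: "X (N+1) = 0" using e2 a0 by simp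
  show "X (N+1) = 0" by (rule XN)
  have LN: "L (N+1) = 0" using e4 XN by simp
  show "L (N+1) = 0" by (rule LN)
  define M where "M j = ?w j *\<^sub>R L j" for j
  have cos: "(\<Sum>j=1..N. Dmat N j i *\<^sub>R M j) = transpose (A i) *v M i" if i: "i \<in> {1..N}" for i
  proof -
    have "(\<Sum>j=1..N+1. Ddag N i j *\<^sub>R L j) + transpose (A i) *v L i = 0"
      using eq3[rule_format, OF i] XU[OF i] by simp
    then have h: "(\<Sum>j=1..N. Ddag N i j *\<^sub>R L j) + transpose (A i) *v L i = 0"
      using LN by simp
    have "?w i *\<^sub>R ((\<Sum>j=1..N. Ddag N i j *\<^sub>R L j) + transpose (A i) *v L i) = 0" using h by simp
    then have "(\<Sum>j=1..N. (?w i * Ddag N i j) *\<^sub>R L j) + transpose (A i) *v M i = 0"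
      unfolding M_def by (simp add: scaleR_add_right scaleR_sum_right matrix_vector_mult_scaleR)
    moreover have "(\<Sum>j=1..N. (?w i * Ddag N i j) *\<^sub>R L j) = - (\<Sum>j=1..N. Dmat N j i *\<^sub>R M j)"
      unfolding M_def using w0 i by (simp add: ddag1 sum_negf[symmetric] mult.commute)
    ultimately show ?thesis by (simp add: algebra_simps)
  qed
  have Mk: "M k = (\<Sum>i=1..N. E i k *\<^sub>R (transpose (A i) *v M i))" if k: "k \<in> {1..N}" for k
  proof -
    have "(\<Sum>i=1..N. E i k *\<^sub>R (transpose (A i) *v M i)) = (\<Sum>i=1..N. E i k *\<^sub>R (\<Sum>j=1..N. Dmat N j i *\<^sub>R M j))"
      using cos by simp
    also have "\<dots> = (\<Sum>j=1..N. (\<Sum>i=1..N. Dmat N j i * E i k) *\<^sub>R M j)"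
      by (simp add: scaleR_sum_right scaleR_sum_left) (subst sum.swap, simp add: mult.commute)
    also have "\<dots> = (\<Sum>j=1..N. (if j = k then 1 else 0) *\<^sub>R M j)"
      using E(1) k by (intro sum.cong refl) simp
    also have "\<dots> = (\<Sum>j=1..N. if j = k then M j else 0)" by (intro sum.cong) auto
    also have "\<dots> = M k" using k by (simp add: sum.delta)
    finally show ?thesis by simp
  qed
  define SS where "SS = (\<Sum>k=1..N. n1 (M k))"
  have "SS \<le> (\<Sum>k=1..N. \<Sum>i=1..N. \<bar>E i k\<bar> * ((1/4) * n1 (M i)))"
    unfolding SS_def
  proof (intro sum_mono)
    fix k assume k: "k \<in> {1..N}"
    have "n1 (M k) \<le> (\<Sum>i=1..N. \<bar>E i k\<bar> * n1 (transpose (A i) *v M i))"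
      unfolding Mk[OF k] by (rule n1_sum) simp
    also have "\<dots> \<le> (\<Sum>i=1..N. \<bar>E i k\<bar> * ((1/4) * n1 (M i)))"
    proof (intro sum_mono mult_left_mono)
      fix i assume i: "i \<in> {1..N}"
      have "n1 (transpose (A i) *v M i) \<le> inf_norm (A i) * n1 (M i)" by (rule n1_transpose)
      also have "\<dots> \<le> (1/4) * n1 (M i)" using Anorm i n1_nonneg by (intro mult_right_mono) auto
      finally show "n1 (transpose (A i) *v M i) \<le> (1/4) * n1 (M i)" .
    qed simp
    finally show "n1 (M k) \<le> (\<Sum>i=1..N. \<bar>E i k\<bar> * ((1/4) * n1 (M i)))" .
  qed
  also have "\<dots> = (\<Sum>i=1..N. (\<Sum>k=1..N. \<bar>E i k\<bar>) * ((1/4) * n1 (M i)))"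
    by (subst sum.swap) (simp add: sum_distrib_right sum_divide_distrib)
  also have "\<dots> \<le> (\<Sum>i=1..N. 2 * ((1/4) * n1 (M i)))"
    using E(2) n1_nonneg by (intro sum_mono mult_right_mono) auto
  also have "\<dots> = SS / 2" unfolding SS_def by (simp add: sum_divide_distrib)
  finally have "SS \<le> SS / 2" .
  moreover have "SS \<ge> 0" unfolding SS_def by (simp add: sum_nonneg n1_nonneg)
  ultimately have "SS = 0" by simp
  then have "(\<Sum>k=1..N. n1 (M k)) = 0" unfolding SS_def .
  then have nz: "\<forall>k\<in>{1..N}. n1 (M k) = 0"
    using sum_nonneg_eq_0_iff[of "{1..N}" "\<lambda>k. n1 (M k)"] n1_nonneg by blast
  have "\<forall>k\<in>{1..N}. L k = 0"
  proof
    fix k assume k: "k \<in> {1..N}"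
    then have "M k = 0" using nz n1_zero by blast
    moreover have "?w k > 0" using wpos k by blast
    ultimately show "L k = 0" unfolding M_def by simp
  qed
  then show "\<forall>i\<in>{1..N}. X i = 0 \<and> U i = 0 \<and> L i = 0" using XU by blast
qed


lemma sum_UNIV_Plus: "(\<Sum>i\<in>(UNIV::('a::finite + 'b::finite) set). f i) = (\<Sum>a\<in>UNIV. f (Inl a)) + (\<Sum>b\<in>UNIV. f (Inr b))"
  by (subst UNIV_Plus_UNIV[symmetric], subst sum.Plus) (auto simp: o_def)

lemma block_sym:
  assumes "transpose Q = Q" "transpose R = R"
  shows "transpose (block_QSR Q S R) = block_QSR Q S R"
proof -
  have q: "Q $ a $ b = Q $ b $ a" for a b
  proof -
    have "transpose Q $ a $ b = Q $ b $ a" by (simp add: transpose_def)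
    then show ?thesis using assms(1) by simp
  qed
  have r: "R $ a $ b = R $ b $ a" for a b
  proof -
    have "transpose R $ a $ b = R $ b $ a" by (simp add: transpose_def)
    then show ?thesis using assms(2) by simp
  qed
  show ?thesis
    by (auto simp: vec_eq_iff transpose_def block_QSR_def q r split: sum.splits)
qed

lemma block_quad:
  fixes Q :: "real^'n^'n" and S :: "real^'m^'n" and R :: "real^'m^'m" and X :: "real^'n" and U :: "real^'m"
  defines "z \<equiv> (\<chi> i. case i of Inl a \<Rightarrow> X $ a | Inr b \<Rightarrow> U $ b) :: real^('n+'m)"
  shows "z \<bullet> (block_QSR Q S R *v z) = X \<bullet> (Q *v X) + X \<bullet> (S *v U) + U \<bullet> (transpose S *v X) + U \<bullet> (R *v U)"
    and "z = 0 \<longleftrightarrow> X = 0 \<and> U = 0"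
proof -
  show "z \<bullet> (block_QSR Q S R *v z) = X \<bullet> (Q *v X) + X \<bullet> (S *v U) + U \<bullet> (transpose S *v X) + U \<bullet> (R *v U)"
    unfolding z_def inner_vec_def matrix_vector_mult_def block_QSR_def
    by (simp add: sum_UNIV_Plus transpose_def sum.distrib sum_distrib_left algebra_simps)
  show "z = 0 \<longleftrightarrow> X = 0 \<and> U = 0"
  proof
    assume "z = 0"
    then have "z $ Inl a = 0" "z $ Inr b = 0" for a b by auto
    then show "X = 0 \<and> U = 0" unfolding z_def by (auto simp: vec_eq_iff)
  next
    assume "X = 0 \<and> U = 0"
    then show "z = 0" unfolding z_def by (auto simp: vec_eq_iff split: sum.splits)
  qed
qed


instantiation "fun" :: (type, real_vector) real_vector
begin
definition scaleR_fun :: "real \<Rightarrow> ('a \<Rightarrow> 'b) \<Rightarrow> 'a \<Rightarrow> 'b" where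
  "scaleR_fun c f = (\<lambda>x. c *\<^sub>R f x)"
instance by standard (auto simp: scaleR_fun_def fun_eq_iff scaleR_add_right scaleR_add_left)
end

lemma inj_imp_surj_fin:
  fixes f :: "'a::real_vector \<Rightarrow> 'a" and V :: "'a set"
  assumes lin: "linear f" and sub: "subspace V" and W: "finite W" "V \<subseteq> span W"
    and into: "f ` V \<subseteq> V" and inj: "inj_on f V"
  shows "f ` V = V"
proof
  show "f ` V \<subseteq> V" by (rule into)
  obtain B where B: "B \<subseteq> V" "independent B" "V \<subseteq> span B" "card B = dim V"
    using basis_exists[of V] by blast
  have finB: "finite B" using independent_span_bound[OF W(1) B(2)] B(1) W(2) by blast
  have spB: "span B = V" using B(1,3) sub by (metis span_minimal subset_antisym)
  have injB: "inj_on f (span B)" using inj spB by simp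
  have indf: "independent (f ` B)" by (rule linear_independent_injective_image[OF lin B(2) injB])
  have cardf: "card (f ` B) = card B" using card_image inj_on_subset[OF inj B(1)] by blast
  have imf: "f ` V = span (f ` B)" using linear_span_image[OF lin, of B] spB by simp
  show "V \<subseteq> f ` V"
  proof
    fix v assume v: "v \<in> V"
    show "v \<in> f ` V"
    proof (rule ccontr)
      assume nv: "v \<notin> f ` V"
      then have "v \<notin> span (f ` B)" using imf by simp
      then have ind2: "independent (insert v (f ` B))" using indf by (simp add: independent_insert)
      have "insert v (f ` B) \<subseteq> span B" using v spB into B(1) by auto
      then have "card (insert v (f ` B)) \<le> card B" using independent_span_bound[OF finB ind2] by blast
      moreover have "v \<notin> f ` B" using nv B(1) by auto
      then have "card (insert v (f ` B)) = card B + 1" using cardf finB by simp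
      ultimately show False by simp
    qed
  qed
qed


lemma gradT_linear:
  fixes A :: "nat \<Rightarrow> real^'n::finite^'n" and Q :: "nat \<Rightarrow> real^'n^'n"
    and B :: "nat \<Rightarrow> real^'m::finite^'n" and S :: "nat \<Rightarrow> real^'m^'n"
    and R :: "nat \<Rightarrow> real^'m^'m" and T :: "real^'n^'n"
  shows "linear (gradT N A B Q S R T)"
proof (rule linearI)
  fix x y :: "('n::finite, 'm::finite) kkt_vec"
  obtain X U L where x: "x = (X, U, L)" by (cases x) auto
  obtain X' U' L' where y: "y = (X', U', L')" by (cases y) auto
  show "gradT N A B Q S R T (x + y) = gradT N A B Q S R T x + gradT N A B Q S R T y"
    unfolding x y gradT_def
    by (simp add: fun_eq_iff sum.distrib scaleR_add_right matrix_vector_right_distrib algebra_simps)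
next
  fix c :: real and x :: "('n::finite, 'm::finite) kkt_vec"
  obtain X U L where x: "x = (X, U, L)" by (cases x) auto
  show "gradT N A B Q S R T (c *\<^sub>R x) = c *\<^sub>R gradT N A B Q S R T x"
    unfolding x gradT_def
    by (simp add: fun_eq_iff scaleR_fun_def scaleR_sum_right matrix_vector_mult_scaleR algebra_simps)
qed

lemma gradT_into: "gradT N A B Q S R T ` kkt_space N \<subseteq> kkt_space N"
  unfolding gradT_def kkt_space_def by auto

lemma kkt_subspace: "subspace (kkt_space N)"
  unfolding subspace_def kkt_space_def by (auto simp: scaleR_fun_def zero_prod_def)

definition delta :: "nat \<Rightarrow> 'a::zero \<Rightarrow> nat \<Rightarrow> 'a" where "delta i v = (\<lambda>j. if j = i then v else 0)"

lemma sum_delta: "finite I \<Longrightarrow> (\<Sum>i\<in>I. delta i (X i)) = (\<lambda>j. if j \<in> I then X j else (0::'a::comm_monoid_add))"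
  by (induction I rule: finite_induct) (auto simp: delta_def fun_eq_iff)

lemma in_span_lin: "linear g \<Longrightarrow> g v \<in> span (g ` (Basis :: 'b::euclidean_space set))"
  using linear_span_image[of g Basis] by simp

lemma kkt_span:
  fixes N :: nat
  defines "W \<equiv> (\<Union>i\<in>{1..N+1}. (\<lambda>v. (delta i v, 0, 0)) ` Basis)
             \<union> (\<Union>i\<in>{1..N}. (\<lambda>v. (0, delta i v, 0)) ` Basis)
             \<union> (\<Union>i\<in>{1..N+1}. (\<lambda>v. (0, 0, delta i v)) ` Basis) :: ('n::finite, 'm::finite) kkt_vec set"
  shows "finite W" "kkt_space N \<subseteq> span W"
proof -
  show "finite W" unfolding W_def by simp
  have l1: "linear (\<lambda>v::real^'n. (delta i v, 0::nat\<Rightarrow>real^'m, 0::nat\<Rightarrow>real^'n))" for i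
    by (rule linearI) (auto simp: delta_def fun_eq_iff scaleR_fun_def)
  have l2: "linear (\<lambda>v::real^'m. (0::nat\<Rightarrow>real^'n, delta i v, 0::nat\<Rightarrow>real^'n))" for i
    by (rule linearI) (auto simp: delta_def fun_eq_iff scaleR_fun_def)
  have l3: "linear (\<lambda>v::real^'n. (0::nat\<Rightarrow>real^'n, 0::nat\<Rightarrow>real^'m, delta i v))" for i
    by (rule linearI) (auto simp: delta_def fun_eq_iff scaleR_fun_def)
  have m1: "(delta i v, 0::nat\<Rightarrow>real^'m, 0::nat\<Rightarrow>real^'n) \<in> span W" if "i \<in> {1..N+1}" for i and v :: "real^'n"
  proof -
    have "(\<lambda>v. (delta i v, 0::nat\<Rightarrow>real^'m, 0::nat\<Rightarrow>real^'n)) ` Basis \<subseteq> W" unfolding W_def using that by blast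
    from span_mono[OF this] in_span_lin[OF l1] show ?thesis by blast
  qed
  have m2: "(0::nat\<Rightarrow>real^'n, delta i v, 0::nat\<Rightarrow>real^'n) \<in> span W" if "i \<in> {1..N}" for i and v :: "real^'m"
  proof -
    have "(\<lambda>v. (0::nat\<Rightarrow>real^'n, delta i v, 0::nat\<Rightarrow>real^'n)) ` Basis \<subseteq> W" unfolding W_def using that by blast
    from span_mono[OF this] in_span_lin[OF l2] show ?thesis by blast
  qed
  have m3: "(0::nat\<Rightarrow>real^'n, 0::nat\<Rightarrow>real^'m, delta i v) \<in> span W" if "i \<in> {1..N+1}" for i and v :: "real^'n"
  proof -
    have "(\<lambda>v. (0::nat\<Rightarrow>real^'n, 0::nat\<Rightarrow>real^'m, delta i v)) ` Basis \<subseteq> W" unfolding W_def using that by blast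
    from span_mono[OF this] in_span_lin[OF l3] show ?thesis by blast
  qed
  show "kkt_space N \<subseteq> span W"
  proof
    fix x :: "('n,'m) kkt_vec" assume x: "x \<in> kkt_space N"
    obtain X U L where xe: "x = (X, U, L)" by (cases x) auto
    have X: "X = (\<lambda>j. if j \<in> {1..N+1} then X j else 0)" using x xe unfolding kkt_space_def by auto
    have U: "U = (\<lambda>j. if j \<in> {1..N} then U j else 0)" using x xe unfolding kkt_space_def by auto
    have L: "L = (\<lambda>j. if j \<in> {1..N+1} then L j else 0)" using x xe unfolding kkt_space_def by auto
    have "(X, U, L) = (\<Sum>i\<in>{1..N+1}. (delta i (X i), 0, 0)) + (\<Sum>i\<in>{1..N}. (0, delta i (U i), 0))
                      + (\<Sum>i\<in>{1..N+1}. (0, 0, delta i (L i)))"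
      apply (simp only: sum_prod)
      apply (subst (1 2 3) sum_delta, simp, simp, simp)
      apply (subst X, subst U, subst L)
      apply simp
      done
    also have "\<dots> \<in> span W"
      by (intro span_add span_sum) (auto intro: m1 m2 m3)
    finally show "x \<in> span W" using xe by simp
  qed
qed

lemma bij_from_kernel:
  assumes ker: "\<And>X U L. (X,U,L) \<in> kkt_space N \<Longrightarrow> gradT N A B Q S R T (X,U,L) = 0 \<Longrightarrow> (X,U,L) = 0"
  shows "bij_betw (gradT N A B Q S R T) (kkt_space N) (kkt_space N)"
proof -
  let ?f = "gradT N A B Q S R T"
  have inj: "inj_on ?f (kkt_space N)"
    unfolding linear_inj_on_iff_eq_0[OF gradT_linear kkt_subspace]
  proof (intro ballI impI)
    fix x assume "x \<in> kkt_space N" "?f x = 0"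
    then show "x = 0" using ker by (cases x) auto
  qed
  have "?f ` kkt_space N = kkt_space N"
    by (rule inj_imp_surj_fin[OF gradT_linear kkt_subspace kkt_span gradT_into inj])
  then show ?thesis using inj unfolding bij_betw_def by simp
qed

theorem proposition4p2:
  fixes N :: nat
    and A :: "nat \<Rightarrow> real^'n^'n" and Q :: "nat \<Rightarrow> real^'n^'n"
    and B :: "nat \<Rightarrow> real^'m^'n" and S :: "nat \<Rightarrow> real^'m^'n"
    and R :: "nat \<Rightarrow> real^'m^'m" and T :: "real^'n^'n"
  assumes N: "N \<ge> 1"
    and symQ: "\<forall>i\<in>{1..N}. transpose (Q i) = Q i"
    and symR: "\<forall>i\<in>{1..N}. transpose (R i) = R i"
    and symT: "transpose T = T"
    and eig: "\<exists>\<alpha>>0. (\<forall>\<mu>. is_eigenvalue T \<mu> \<longrightarrow> \<mu> > \<alpha>)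
              \<and> (\<forall>i\<in>{1..N}. \<forall>\<mu>. is_eigenvalue (block_QSR (Q i) (S i) (R i)) \<mu> \<longrightarrow> \<mu> > \<alpha>)"
    and Anorm: "\<forall>i\<in>{1..N}. inf_norm (A i) \<le> 1/4 \<and> inf_norm (transpose (A i)) \<le> 1/4"
    and Dinv: "\<exists>E :: nat \<Rightarrow> nat \<Rightarrow> real.
                 (\<forall>i\<in>{1..N}. \<forall>j\<in>{1..N}. (\<Sum>k=1..N. Dmat N i k * E k j) = (if i = j then 1 else 0))
               \<and> (\<forall>i\<in>{1..N}. \<forall>j\<in>{1..N}. (\<Sum>k=1..N. E i k * Dmat N k j) = (if i = j then 1 else 0))
               \<and> (\<forall>i\<in>{1..N}. (\<Sum>j=1..N. \<bar>E i j\<bar>) \<le> 2)"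
  shows "bij_betw (gradT N A B Q S R T) (kkt_space N) (kkt_space N)"
proof -
  obtain \<alpha> :: real where a0: "\<alpha> > 0" and eT: "\<forall>\<mu>. is_eigenvalue T \<mu> \<longrightarrow> \<mu> > \<alpha>"
    and eB: "\<forall>i\<in>{1..N}. \<forall>\<mu>. is_eigenvalue (block_QSR (Q i) (S i) (R i)) \<mu> \<longrightarrow> \<mu> > \<alpha>"
    using eig by blast
  have psdT: "\<forall>x. x \<bullet> (T *v x) \<ge> 0"
  proof
    fix x :: "real^'n"
    show "x \<bullet> (T *v x) \<ge> 0"
    proof (cases "x = 0")
      case True then show ?thesis by simp
    next
      case False
      have "\<forall>\<mu>. is_eigenvalue T \<mu> \<longrightarrow> \<mu> > 0" using eT a0 by force
      then show ?thesis using pd_from_eig[OF symT _ False] by force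
    qed
  qed
  have pdB: "\<forall>i\<in>{1..N}. \<forall>x u. (x \<noteq> 0 \<or> u \<noteq> 0) \<longrightarrow>
               x \<bullet> (Q i *v x) + x \<bullet> (S i *v u) + u \<bullet> (transpose (S i) *v x) + u \<bullet> (R i *v u) > 0"
  proof (intro ballI allI impI)
    fix i x u assume i: "i \<in> {1..N}" and xu: "(x::real^'n) \<noteq> 0 \<or> (u::real^'m) \<noteq> 0"
    define z where "z = ((\<chi> j. case j of Inl a \<Rightarrow> x $ a | Inr b \<Rightarrow> u $ b) :: real^('n+'m))"
    have z0: "z \<noteq> 0" using block_quad(2)[of x u] xu unfolding z_def by blast
    have sym: "transpose (block_QSR (Q i) (S i) (R i)) = block_QSR (Q i) (S i) (R i)"
      using symQ symR i by (intro block_sym) auto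
    have "\<forall>\<mu>. is_eigenvalue (block_QSR (Q i) (S i) (R i)) \<mu> \<longrightarrow> \<mu> > 0" using eB a0 i by force
    then have "z \<bullet> (block_QSR (Q i) (S i) (R i) *v z) > 0" by (rule pd_from_eig[OF sym _ z0])
    then show "x \<bullet> (Q i *v x) + x \<bullet> (S i *v u) + u \<bullet> (transpose (S i) *v x) + u \<bullet> (R i *v u) > 0"
      unfolding z_def block_quad(1) .
  qed
  obtain E :: "nat \<Rightarrow> nat \<Rightarrow> real" where
    E1: "\<forall>i\<in>{1..N}. \<forall>j\<in>{1..N}. (\<Sum>k=1..N. Dmat N i k * E k j) = (if i = j then 1 else 0)"
    and E3: "\<forall>i\<in>{1..N}. (\<Sum>j=1..N. \<bar>E i j\<bar>) \<le> 2"
    using Dinv by blast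
  have wpos: "\<forall>i\<in>{1..N}. gauss_weight N i > 0" using weight_pos[OF N] by blast
  have An: "\<forall>i\<in>{1..N}. inf_norm (A i) \<le> 1/4" using Anorm by blast
  show ?thesis
  proof (rule bij_from_kernel)
    fix X L :: "nat \<Rightarrow> real^'n" and U :: "nat \<Rightarrow> real^'m"
    assume sp: "(X, U, L) \<in> kkt_space N" and g0: "gradT N A B Q S R T (X, U, L) = 0"
    let ?F1 = "\<lambda>i. if 1 \<le> i \<and> i \<le> N then
              (\<Sum>j=1..N. Dmat N i j *\<^sub>R X j) - A i *v X i - B i *v U i
           else if i = N + 1 then
              X (N + 1) - (\<Sum>j=1..N. gauss_weight N j *\<^sub>R (A j *v X j + B j *v U j))
           else 0"
    let ?F2 = "\<lambda>i. if 1 \<le> i \<and> i \<le> N then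
              transpose (S i) *v X i + R i *v U i + transpose (B i) *v L i
           else 0"
    let ?F3 = "\<lambda>i. if 1 \<le> i \<and> i \<le> N then
              (\<Sum>j=1..N+1. Ddag N i j *\<^sub>R L j) + transpose (A i) *v L i + Q i *v X i + S i *v U i
           else if i = N + 1 then
              L (N + 1) - T *v X (N + 1)
           else 0"
    have gg: "gradT N A B Q S R T (X, U, L) = (?F1, ?F2, ?F3)" unfolding gradT_def by simp
    have F: "?F1 = 0" "?F2 = 0" "?F3 = 0" using g0 unfolding gg by (simp_all add: zero_prod_def)
    have f1: "?F1 i = 0" "?F2 i = 0" "?F3 i = 0" for i
      using fun_cong[OF F(1), of i] fun_cong[OF F(2), of i] fun_cong[OF F(3), of i]
      by (simp_all only: zero_fun_apply)
    have eq1: "\<forall>i\<in>{1..N}. (\<Sum>j=1..N. Dmat N i j *\<^sub>R X j) - A i *v X i - B i *v U i = 0"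
    proof
      fix i assume "i \<in> {1..N}" then show "(\<Sum>j=1..N. Dmat N i j *\<^sub>R X j) - A i *v X i - B i *v U i = 0"
        using f1(1)[of i] by simp
    qed
    have eq2: "X (N+1) - (\<Sum>j=1..N. gauss_weight N j *\<^sub>R (A j *v X j + B j *v U j)) = 0"
      using f1(1)[of "N+1"] by simp
    have eq5: "\<forall>i\<in>{1..N}. transpose (S i) *v X i + R i *v U i + transpose (B i) *v L i = 0"
    proof
      fix i assume "i \<in> {1..N}" then show "transpose (S i) *v X i + R i *v U i + transpose (B i) *v L i = 0"
        using f1(2)[of i] by simp
    qed
    have eq3: "\<forall>i\<in>{1..N}. (\<Sum>j=1..N+1. Ddag N i j *\<^sub>R L j) + transpose (A i) *v L i + Q i *v X i + S i *v U i = 0"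
    proof
      fix i assume "i \<in> {1..N}" then show "(\<Sum>j=1..N+1. Ddag N i j *\<^sub>R L j) + transpose (A i) *v L i + Q i *v X i + S i *v U i = 0"
        using f1(3)[of i] by simp
    qed
    have eq4: "L (N+1) - T *v X (N+1) = 0" using f1(3)[of "N+1"] by simp
    note K = kernel_zero[OF wpos pdB psdT An E1 E3 eq1 eq2 eq5 eq3 eq4]
    have out: "\<forall>i. i \<notin> {1..N+1} \<longrightarrow> X i = 0" "\<forall>i. i \<notin> {1..N} \<longrightarrow> U i = 0" "\<forall>i. i \<notin> {1..N+1} \<longrightarrow> L i = 0"
      using sp unfolding kkt_space_def by auto
    have X0: "X = 0"
    proof
      fix i show "X i = 0 i"
        using K(1) K(2) out(1) by (cases "i \<in> {1..N}"; cases "i = N+1") auto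
    qed
    have U0: "U = 0"
    proof
      fix i show "U i = 0 i"
        using K(1) out(2) by (cases "i \<in> {1..N}") auto
    qed
    have L0: "L = 0"
    proof
      fix i show "L i = 0 i"
        using K(1) K(3) out(3) by (cases "i \<in> {1..N}"; cases "i = N+1") auto
    qed
    show "(X, U, L) = 0" using X0 U0 L0 by (simp add: zero_prod_def)
  qed
qed

end
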